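(* Let $X$ be a C*-correspondence of finite rank over $A$ and let $\beta>0$. If $\tau\in\operatorname{Avt}_\beta(A)$ then $c_{\tau,\beta}=\infty$.
   Context: $X$ is a C*-correspondence over $A$ (right Hilbert $A$-module with left action $\phi_X\colon A\to\mathcal{L}(X)$). $X$ has finite rank if there are $x_1,\dots,x_d$ in the unit ball of $X$ with $\sum_{i=1}^d\theta_{x_i,x_i}=1_X$, where $\theta_{\xi,\eta}(\zeta)=\xi\langle\eta,\zeta\rangle$ (a unit decomposition). For a word $\mu=\mu_n\cdots\mu_1$ on $\{1,\dots,d\}$ put $x_\mu=x_{\mu_n}\otimes\cdots\otimes x_{\mu_1}\in X^{\otimes n}$, and $x_\emptyset=1$ (unit of $A$ or of its unitization). $\operatorname{Tr}(A)$ denotes the tracial states of $A$ (extended to the unitization when needed). For $\tau\in\operatorname{Tr}(A)$ and $\beta>0$, $c_{\tau,\beta}:=\sum_{k=0}^\infty e^{-k\beta}\sum_{|\mu|=k}\tau(\langle x_\mu,x_\mu\rangle)$ (the $k=0$ term being $1$), a value in $[1,\infty]$ independent of the unit decomposition. $\operatorname{Avt}_\beta(A)$ is the set of $\tau\in\operatorname{Tr}(A)$ with $\tau(a)=e^{-\beta}\sum_{i=1}^d\tau(\langle x_i,ax_i\rangle)$ for all $a\in A$. *)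

theory Defs
  imports "HOL-Analysis.Analysis" "HOL-Library.Extended_Nonnegative_Real"
begin

text \<open>C*-algebra A: a real Banach algebra (type class) with a complex scalar
  multiplication sc and an involution st satisfying the C*-identity.\<close>

definition cstar_algebra ::
  "(complex \<Rightarrow> 'a::{real_normed_algebra,banach} \<Rightarrow> 'a) \<Rightarrow> ('a \<Rightarrow> 'a) \<Rightarrow> bool" where
  "cstar_algebra sc st \<longleftrightarrow>
     (\<forall>r x. sc (complex_of_real r) x = r *\<^sub>R x) \<and>
     (\<forall>c e x. sc (c * e) x = sc c (sc e x)) \<and>
     (\<forall>c e x. sc (c + e) x = sc c x + sc e x) \<and>
     (\<forall>c x y. sc c (x + y) = sc c x + sc c y) \<and>
     (\<forall>c x y. sc c (x * y) = sc c x * y \<and> sc c (x * y) = x * sc c y) \<and>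
     (\<forall>c x. norm (sc c x) = cmod c * norm x) \<and>
     (\<forall>x. st (st x) = x) \<and>
     (\<forall>x y. st (x + y) = st x + st y) \<and>
     (\<forall>c x. st (sc c x) = sc (cnj c) (st x)) \<and>
     (\<forall>x y. st (x * y) = st y * st x) \<and>
     (\<forall>x. norm (st x * x) = (norm x)\<^sup>2)"

definition cstar_positive :: "('a::times \<Rightarrow> 'a) \<Rightarrow> 'a \<Rightarrow> bool" where
  "cstar_positive st a \<longleftrightarrow> (\<exists>b. a = st b * b)"

definition tracial_state ::
  "(complex \<Rightarrow> 'a::{real_normed_algebra,banach} \<Rightarrow> 'a) \<Rightarrow> ('a \<Rightarrow> 'a) \<Rightarrow> ('a \<Rightarrow> complex) \<Rightarrow> bool" where
  "tracial_state sc st \<tau> \<longleftrightarrow>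
     (\<forall>x y. \<tau> (x + y) = \<tau> x + \<tau> y) \<and>
     (\<forall>c x. \<tau> (sc c x) = c * \<tau> x) \<and>
     (\<forall>a. cstar_positive st a \<longrightarrow> Im (\<tau> a) = 0 \<and> 0 \<le> Re (\<tau> a)) \<and>
     (\<forall>x y. \<tau> (x * y) = \<tau> (y * x)) \<and>
     onorm \<tau> = 1"

definition cstar_correspondence ::
  "(complex \<Rightarrow> 'a::{real_normed_algebra,banach} \<Rightarrow> 'a) \<Rightarrow> ('a \<Rightarrow> 'a) \<Rightarrow>
   (complex \<Rightarrow> 'x::banach \<Rightarrow> 'x) \<Rightarrow> ('x \<Rightarrow> 'a \<Rightarrow> 'x) \<Rightarrow> ('x \<Rightarrow> 'x \<Rightarrow> 'a) \<Rightarrow>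
   ('a \<Rightarrow> 'x \<Rightarrow> 'x) \<Rightarrow> bool" where
  "cstar_correspondence sc st scX ra ip phi \<longleftrightarrow>
     cstar_algebra sc st \<and>
     \<comment> \<open>complex vector space structure compatible with the real one\<close>
     (\<forall>r x. scX (complex_of_real r) x = r *\<^sub>R x) \<and>
     (\<forall>c e x. scX (c * e) x = scX c (scX e x)) \<and>
     (\<forall>c e x. scX (c + e) x = scX c x + scX e x) \<and>
     (\<forall>c x y. scX c (x + y) = scX c x + scX c y) \<and>
     \<comment> \<open>right A-module\<close>
     (\<forall>x y a. ra (x + y) a = ra x a + ra y a) \<and>
     (\<forall>x a b. ra x (a + b) = ra x a + ra x b) \<and>
     (\<forall>x a b. ra (ra x a) b = ra x (a * b)) \<and>
     (\<forall>c x a. scX c (ra x a) = ra (scX c x) a \<and> scX c (ra x a) = ra x (sc c a)) \<and>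
     \<comment> \<open>A-valued inner product\<close>
     (\<forall>x y z. ip x (y + z) = ip x y + ip x z) \<and>
     (\<forall>x y c. ip x (scX c y) = sc c (ip x y)) \<and>
     (\<forall>x y a. ip x (ra y a) = ip x y * a) \<and>
     (\<forall>x y. ip y x = st (ip x y)) \<and>
     (\<forall>x. cstar_positive st (ip x x)) \<and>
     (\<forall>x. ip x x = 0 \<longrightarrow> x = 0) \<and>
     (\<forall>x. norm x = sqrt (norm (ip x x))) \<and>
     \<comment> \<open>left action by adjointable operators, a *-homomorphism\<close>
     (\<forall>a x y. phi a (x + y) = phi a x + phi a y) \<and>
     (\<forall>a c x. phi a (scX c x) = scX c (phi a x)) \<and>
     (\<forall>a x b. phi a (ra x b) = ra (phi a x) b) \<and>
     (\<forall>a b x. phi (a + b) x = phi a x + phi b x) \<and>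
     (\<forall>c a x. phi (sc c a) x = scX c (phi a x)) \<and>
     (\<forall>a b x. phi (a * b) x = phi a (phi b x)) \<and>
     (\<forall>a x y. ip (phi a x) y = ip x (phi (st a) y))"

text \<open>Unit decomposition x_1..x_d: vectors in the unit ball with
  sum_i theta_{x_i,x_i} = 1_X, theta_{xi,eta}(zeta) = xi <eta,zeta>.\<close>

definition unit_decomposition ::
  "('x::real_normed_vector \<Rightarrow> 'a \<Rightarrow> 'x) \<Rightarrow> ('x \<Rightarrow> 'x \<Rightarrow> 'a) \<Rightarrow> nat \<Rightarrow> (nat \<Rightarrow> 'x) \<Rightarrow> bool" where
  "unit_decomposition ra ip d xs \<longleftrightarrow>
     (\<forall>i\<in>{1..d}. norm (xs i) \<le> 1) \<and>
     (\<forall>z. (\<Sum>i=1..d. ra (xs i) (ip (xs i) z)) = z)"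

text \<open>Inner products in the internal tensor power X^{\<otimes>n}:
  for a word w = [w_1,...,w_m] (w_1 leftmost), tens_ip a w = <x_w, phi^{(m)}(a) x_w>
  where phi^{(m)}(a)(y_1 \<otimes> ... \<otimes> y_m) = phi(a) y_1 \<otimes> y_2 \<otimes> ... \<otimes> y_m,
  using <xi \<otimes> eta, xi' \<otimes> eta'> = <eta, phi(<xi,xi'>) eta'>.\<close>

fun tens_ip :: "('x \<Rightarrow> 'x \<Rightarrow> 'a) \<Rightarrow> ('a \<Rightarrow> 'x \<Rightarrow> 'x) \<Rightarrow> (nat \<Rightarrow> 'x) \<Rightarrow> 'a \<Rightarrow> nat list \<Rightarrow> 'a" where
  "tens_ip ip phi xs a [] = a"
| "tens_ip ip phi xs a (i # w) = tens_ip ip phi xs (ip (xs i) (phi a (xs i))) w"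

text \<open>For a nonempty word mu = mu_n ... mu_1 (list [mu_n,...,mu_1]),
  x_mu = x_{mu_n} \<otimes> ... \<otimes> x_{mu_1} and word_ip gives <x_mu, x_mu> in A.\<close>

fun word_ip :: "('x \<Rightarrow> 'x \<Rightarrow> 'a) \<Rightarrow> ('a \<Rightarrow> 'x \<Rightarrow> 'x) \<Rightarrow> (nat \<Rightarrow> 'x) \<Rightarrow> nat list \<Rightarrow> 'a" where
  "word_ip ip phi xs [] = undefined"
| "word_ip ip phi xs (i # w) = tens_ip ip phi xs (ip (xs i) (xs i)) w"

definition words :: "nat \<Rightarrow> nat \<Rightarrow> nat list set" where
  "words d k = {\<mu>. length \<mu> = k \<and> set \<mu> \<subseteq> {1..d}}"

definition c_tau_beta ::
  "('x \<Rightarrow> 'x \<Rightarrow> 'a) \<Rightarrow> ('a \<Rightarrow> 'x \<Rightarrow> 'x) \<Rightarrow> nat \<Rightarrow> (nat \<Rightarrow> 'x) \<Rightarrow> ('a \<Rightarrow> complex) \<Rightarrow> real \<Rightarrow> ennreal" where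
  "c_tau_beta ip phi d xs \<tau> \<beta> =
     (\<Sum>k. ennreal (exp (- real k * \<beta>) *
        (if k = 0 then 1 else (\<Sum>\<mu>\<in>words d k. Re (\<tau> (word_ip ip phi xs \<mu>))))))"

definition Avt ::
  "(complex \<Rightarrow> 'a::{real_normed_algebra,banach} \<Rightarrow> 'a) \<Rightarrow> ('a \<Rightarrow> 'a) \<Rightarrow>
   ('x \<Rightarrow> 'x \<Rightarrow> 'a) \<Rightarrow> ('a \<Rightarrow> 'x \<Rightarrow> 'x) \<Rightarrow> nat \<Rightarrow> (nat \<Rightarrow> 'x) \<Rightarrow> real \<Rightarrow> ('a \<Rightarrow> complex) set" where
  "Avt sc st ip phi d xs \<beta> =
     {\<tau>. tracial_state sc st \<tau> \<and>
          (\<forall>a. \<tau> a = complex_of_real (exp (- \<beta>)) * (\<Sum>i=1..d. \<tau> (ip (xs i) (phi a (xs i)))))}"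

end

theory Submission imports Defs begin

lemma words_finite: "finite (words d k)"
  unfolding words_def using finite_lists_length_eq[of "{1..d}" k] by (simp add: conj_commute)

lemma words_Suc_sum:
  fixes f :: "nat list \<Rightarrow> 'b::comm_monoid_add"
  shows "(\<Sum>w\<in>words d (Suc k). f w) = (\<Sum>i=1..d. \<Sum>w\<in>words d k. f (i # w))"
proof -
  have eq: "words d (Suc k) = (\<lambda>(i,w). i # w) ` ({1..d} \<times> words d k)"
  proof
    show "words d (Suc k) \<subseteq> (\<lambda>(i,w). i # w) ` ({1..d} \<times> words d k)"
    proof
      fix w assume "w \<in> words d (Suc k)"
      then obtain i v where "w = i # v" "i \<in> {1..d}" "v \<in> words d k"
        unfolding words_def by (cases w) auto
      then show "w \<in> (\<lambda>(i,w). i # w) ` ({1..d} \<times> words d k)" by force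
    qed
  qed (auto simp: words_def)
  have inj: "inj_on (\<lambda>(i,w). i # w) ({1..d} \<times> words d k)"
    by (auto simp: inj_on_def)
  have "(\<Sum>w\<in>words d (Suc k). f w) = (\<Sum>p\<in>{1..d} \<times> words d k. f ((\<lambda>(i,w). i # w) p))"
    unfolding eq by (rule sum.reindex[OF inj, unfolded comp_def])
  also have "\<dots> = (\<Sum>i=1..d. \<Sum>w\<in>words d k. f (i # w))"
    by (simp add: sum.cartesian_product split_def)
  finally show ?thesis .
qed

lemma real_lin_zero:
  fixes a b :: real
  assumes "\<And>t. a + t * b \<ge> 0" shows "b = 0"
proof (rule ccontr)
  assume "b \<noteq> 0"
  have "a + (- (\<bar>a\<bar> + 1) / b) * b \<ge> 0" by (rule assms)
  moreover have "(- (\<bar>a\<bar> + 1) / b) * b = -(\<bar>a\<bar>+1)" using \<open>b \<noteq> 0\<close> by simp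
  ultimately show False by linarith
qed

lemma cs_zero:
  assumes A: "cstar_algebra sc st" and T: "tracial_state sc st \<tau>"
    and z: "\<tau> (st z * z) = 0"
  shows "\<tau> (st y * z) = 0"
proof -
  define P where "P = \<tau> (st y * y)"
  define u where "u = \<tau> (st y * z)"
  define v where "v = \<tau> (st z * y)"
  have key: "Im (P + c * u + cnj c * v) = 0 \<and> 0 \<le> Re (P + c * u + cnj c * v)" for c
  proof -
    have pos: "cstar_positive st (st (y + sc c z) * (y + sc c z))"
      unfolding cstar_positive_def by blast
    have "st (y + sc c z) * (y + sc c z)
        = st y * y + sc c (st y * z) + sc (cnj c) (st z * y) + sc c (sc (cnj c) (st z * z))"
    proof -
      have m1: "\<And>c x y. sc c (x * y) = sc c x * y" and m2: "\<And>c x y. sc c (x * y) = x * sc c y"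
        and s1: "\<And>x y. st (x + y) = st x + st y" and s2: "\<And>c x. st (sc c x) = sc (cnj c) (st x)"
        using A unfolding cstar_algebra_def by blast+
      have "st (y + sc c z) * (y + sc c z) = st y * y + st y * sc c z + sc (cnj c) (st z) * y + sc (cnj c) (st z) * sc c z"
        by (simp add: s1 s2 algebra_simps)
      also have "\<dots> = st y * y + sc c (st y * z) + sc (cnj c) (st z * y) + sc c (sc (cnj c) (st z * z))"
        by (simp add: m1[symmetric] m2[symmetric])
      finally show ?thesis .
    qed
    then have "\<tau> (st (y + sc c z) * (y + sc c z)) = P + c * u + cnj c * v"
      using T z unfolding tracial_state_def P_def u_def v_def by simp
    with pos T show ?thesis unfolding tracial_state_def by metis
  qed
  have ImP: "Im P = 0" using key[of 0] by simp
  have "\<And>t. Re P + t * Re (u + v) \<ge> 0"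
    using key[of "complex_of_real _"] by (simp add: algebra_simps)
  then have r1: "Re u + Re v = 0" using real_lin_zero by fastforce
  have "\<And>t. Re P + t * (Im v - Im u) \<ge> 0"
  proof -
    fix t show "Re P + t * (Im v - Im u) \<ge> 0"
      using key[of "\<i> * complex_of_real t"] by (simp add: algebra_simps)
  qed
  then have r2: "Im v - Im u = 0" using real_lin_zero by fastforce
  have i1: "Im u + Im v = 0" using key[of 1] ImP by simp
  have i2: "Re u - Re v = 0" using key[of "\<i>"] ImP by simp
  show ?thesis unfolding u_def[symmetric] using r1 r2 i1 i2 by (simp add: complex_eq_iff)
qed

theorem proposition5p4:
  fixes sc :: "complex \<Rightarrow> 'a::{real_normed_algebra,banach} \<Rightarrow> 'a"
    and st :: "'a \<Rightarrow> 'a"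
    and scX :: "complex \<Rightarrow> 'x::banach \<Rightarrow> 'x"
    and ra :: "'x \<Rightarrow> 'a \<Rightarrow> 'x"
    and ip :: "'x \<Rightarrow> 'x \<Rightarrow> 'a"
    and phi :: "'a \<Rightarrow> 'x \<Rightarrow> 'x"
    and d :: nat and xs :: "nat \<Rightarrow> 'x"
    and \<tau> :: "'a \<Rightarrow> complex" and \<beta> :: real
  assumes "cstar_correspondence sc st scX ra ip phi"
    and "unit_decomposition ra ip d xs"
    and "\<beta> > 0"
    and "\<tau> \<in> Avt sc st ip phi d xs \<beta>"
  shows "c_tau_beta ip phi d xs \<tau> \<beta> = \<infinity>"
proof -
  note C = assms(1)[unfolded cstar_correspondence_def]
  have A: "cstar_algebra sc st" using C by meson
  have T: "tracial_state sc st \<tau>"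
    and Av: "\<And>a. \<tau> a = complex_of_real (exp (- \<beta>)) * (\<Sum>i=1..d. \<tau> (ip (xs i) (phi a (xs i))))"
    using assms(4) unfolding Avt_def by blast+
  have tadd: "\<And>x y. \<tau> (x + y) = \<tau> x + \<tau> y"
    and tpos: "\<And>a. cstar_positive st a \<Longrightarrow> Im (\<tau> a) = 0 \<and> 0 \<le> Re (\<tau> a)"
    and tnorm: "onorm \<tau> = 1"
    using T unfolding tracial_state_def by blast+
  have ipadd: "\<And>x y z. ip x (y + z) = ip x y + ip x z" using C by meson
  have ipra: "\<And>x y a. ip x (ra y a) = ip x y * a" using C by meson
  have ipsym: "\<And>x y. ip y x = st (ip x y)" using C by meson
  have ippos: "\<And>x. cstar_positive st (ip x x)" using C by meson
  have phiadd: "\<And>a x y. phi a (x + y) = phi a x + phi a y" using C by meson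
  have phira: "\<And>a x b. phi a (ra x b) = ra (phi a x) b" using C by meson
  have stst: "\<And>x. st (st x) = x" using A unfolding cstar_algebra_def by blast
  have decomp: "\<And>z. (\<Sum>i=1..d. ra (xs i) (ip (xs i) z)) = z"
    using assms(2) unfolding unit_decomposition_def by blast
  have t0: "\<tau> 0 = 0" using tadd[of 0 0] by simp
  have ip0: "\<And>x. ip x 0 = 0" using ipadd[of _ 0 0] by simp
  have phi0: "\<And>a. phi a 0 = 0" using phiadd[of _ 0 0] by simp
  have tsum: "\<tau> (sum f S) = (\<Sum>i\<in>S. \<tau> (f i))" for f :: "nat \<Rightarrow> 'a" and S
    by (induct S rule: infinite_finite_induct) (simp_all add: t0 tadd)
  have ipsum: "ip x (sum f S) = (\<Sum>i\<in>S. ip x (f i))" for x and f :: "nat \<Rightarrow> 'x" and S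
    by (induct S rule: infinite_finite_induct) (simp_all add: ip0 ipadd)
  have phisum: "phi a (sum f S) = (\<Sum>i\<in>S. phi a (f i))" for a and f :: "nat \<Rightarrow> 'x" and S
    by (induct S rule: infinite_finite_induct) (simp_all add: phi0 phiadd)
  have Av2: "(\<Sum>i=1..d. \<tau> (ip (xs i) (phi a (xs i)))) = complex_of_real (exp \<beta>) * \<tau> a" for a
  proof -
    have e: "complex_of_real (exp \<beta>) * complex_of_real (exp (- \<beta>)) = 1"
      by (simp flip: of_real_mult add: exp_minus)
    have "complex_of_real (exp \<beta>) * \<tau> a = (\<Sum>i=1..d. \<tau> (ip (xs i) (phi a (xs i))))"
      by (subst Av) (simp only: mult.assoc[symmetric] e mult_1_left)
    then show ?thesis by (rule sym)
  qed
  have iter: "(\<Sum>w\<in>words d k. \<tau> (tens_ip ip phi xs a w)) = complex_of_real (exp (real k * \<beta>)) * \<tau> a" for k a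
  proof (induct k arbitrary: a)
    case 0
    have "words d 0 = {[]}" unfolding words_def by auto
    then show ?case by simp
  next
    case (Suc k)
    have "(\<Sum>w\<in>words d (Suc k). \<tau> (tens_ip ip phi xs a w))
        = (\<Sum>i=1..d. complex_of_real (exp (real k * \<beta>)) * \<tau> (ip (xs i) (phi a (xs i))))"
      by (simp add: words_Suc_sum Suc)
    also have "\<dots> = complex_of_real (exp (real k * \<beta>)) * (complex_of_real (exp \<beta>) * \<tau> a)"
      by (simp only: sum_distrib_left[symmetric] Av2)
    also have "\<dots> = complex_of_real (exp (real (Suc k) * \<beta>)) * \<tau> a"
      by (simp add: mult.assoc[symmetric] exp_add[symmetric] distrib_right flip: of_real_mult)
    finally show ?case .
  qed
  define S where "S = (\<Sum>i=1..d. \<tau> (ip (xs i) (xs i)))"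
  have fterm: "(\<Sum>\<mu>\<in>words d (Suc m). Re (\<tau> (word_ip ip phi xs \<mu>))) = exp (real m * \<beta>) * Re S" for m
  proof -
    have "(\<Sum>\<mu>\<in>words d (Suc m). \<tau> (word_ip ip phi xs \<mu>)) = complex_of_real (exp (real m * \<beta>)) * S"
      by (simp add: words_Suc_sum iter S_def sum_distrib_left)
    then have "Re (\<Sum>\<mu>\<in>words d (Suc m). \<tau> (word_ip ip phi xs \<mu>)) = exp (real m * \<beta>) * Re S"
      by simp
    then show ?thesis by (simp add: Re_sum)
  qed
  have nonneg: "\<And>i. Im (\<tau> (ip (xs i) (xs i))) = 0 \<and> 0 \<le> Re (\<tau> (ip (xs i) (xs i)))"
    using tpos ippos by blast
  have Spos: "Re S > 0"
  proof (rule ccontr)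
    assume "\<not> Re S > 0"
    have reS: "Re S = (\<Sum>i=1..d. Re (\<tau> (ip (xs i) (xs i))))" unfolding S_def by (rule Re_sum)
    have "(\<Sum>i=1..d. Re (\<tau> (ip (xs i) (xs i)))) \<ge> 0"
      by (rule sum_nonneg) (use nonneg in blast)
    then have s0: "(\<Sum>i=1..d. Re (\<tau> (ip (xs i) (xs i)))) = 0"
      using \<open>\<not> Re S > 0\<close> reS by linarith
    have "\<forall>i\<in>{1..d}. Re (\<tau> (ip (xs i) (xs i))) = 0"
      using sum_nonneg_eq_0_iff[where A="{1..d}" and f="\<lambda>i. Re (\<tau> (ip (xs i) (xs i)))"] s0 nonneg
      by blast
    then have z: "\<And>i. i \<in> {1..d} \<Longrightarrow> \<tau> (ip (xs i) (xs i)) = 0"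
      using nonneg by (simp add: complex_eq_iff)
    have w0: "\<tau> (st (ip (xs k) (xs i)) * ip (xs k) (xs i)) = 0" if i: "i \<in> {1..d}" and k: "k \<in> {1..d}" for i k
    proof -
      have eq: "st (ip (xs k) (xs i)) * ip (xs k) (xs i) = ip (xs i) (ra (xs k) (ip (xs k) (xs i)))" for k
        by (simp add: ipra stst ipsym[of "xs k" "xs i"])
      have "(\<Sum>k=1..d. \<tau> (st (ip (xs k) (xs i)) * ip (xs k) (xs i))) = \<tau> (ip (xs i) (xs i))"
        by (simp only: eq tsum[symmetric] ipsum[symmetric] decomp)
      then have s0: "(\<Sum>k=1..d. Re (\<tau> (st (ip (xs k) (xs i)) * ip (xs k) (xs i)))) = 0"
        using z[OF i] by (simp only: Re_sum[symmetric] zero_complex.sel)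
      have pk: "\<And>k. Im (\<tau> (st (ip (xs k) (xs i)) * ip (xs k) (xs i))) = 0 \<and> 0 \<le> Re (\<tau> (st (ip (xs k) (xs i)) * ip (xs k) (xs i)))"
        using tpos unfolding cstar_positive_def by blast
      have "Re (\<tau> (st (ip (xs k) (xs i)) * ip (xs k) (xs i))) = 0"
        using sum_nonneg_eq_0_iff[where A="{1..d}" and f="\<lambda>k. Re (\<tau> (st (ip (xs k) (xs i)) * ip (xs k) (xs i)))"] s0 pk k
        by blast
      then show ?thesis using pk by (simp add: complex_eq_iff)
    qed
    have "\<tau> a = 0" for a
    proof -
      have each: "\<tau> (ip (xs i) (phi a (xs i))) = 0" if i: "i \<in> {1..d}" for i
      proof -
        have "ip (xs i) (phi a (xs i)) = (\<Sum>k=1..d. ip (xs i) (phi a (xs k)) * ip (xs k) (xs i))"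
          by (subst (2) decomp[symmetric]) (simp add: phisum ipsum phira ipra)
        then have "\<tau> (ip (xs i) (phi a (xs i))) = (\<Sum>k=1..d. \<tau> (st (st (ip (xs i) (phi a (xs k)))) * ip (xs k) (xs i)))"
          by (simp add: tsum stst)
        also have "\<dots> = 0"
          by (rule sum.neutral) (use cs_zero[OF A T w0[OF i]] in blast)
        finally show ?thesis .
      qed
      show ?thesis by (subst Av) (simp add: each)
    qed
    then have "\<tau> = (\<lambda>x. 0)" by auto
    then have "onorm \<tau> = 0" by (simp add: onorm_zero)
    with tnorm show False by simp
  qed
  define Cc where "Cc = exp (- \<beta>) * Re S"
  have Ccpos: "Cc > 0" unfolding Cc_def using Spos by simp
  define f where "f k = ennreal (exp (- real k * \<beta>) *
        (if k = 0 then 1 else (\<Sum>\<mu>\<in>words d k. Re (\<tau> (word_ip ip phi xs \<mu>)))))" for k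
  have fS: "f (Suc m) = ennreal Cc" for m
  proof -
    have "exp (- real (Suc m) * \<beta>) * (exp (real m * \<beta>) * Re S) = Cc"
    proof -
      have e: "exp (- real (Suc m) * \<beta>) * exp (real m * \<beta>) = exp (- \<beta>)"
        by (simp add: exp_add[symmetric] algebra_simps)
      show ?thesis unfolding Cc_def by (simp only: mult.assoc[symmetric] e)
    qed
    then show ?thesis unfolding f_def by (simp only: fterm) simp
  qed
  have bound: "ennreal (real n * Cc) \<le> suminf f" for n
  proof -
    have "sum f (Suc ` {..<n}) \<le> suminf f" by (rule sum_le_suminf) auto
    moreover have "sum f (Suc ` {..<n}) = ennreal (real n * Cc)"
      by (simp add: sum.reindex fS ennreal_mult' ennreal_of_nat_eq_real_of_nat)
    ultimately show ?thesis by simp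
  qed
  have "suminf f = \<infinity>"
  proof (rule ccontr)
    assume "suminf f \<noteq> \<infinity>"
    then obtain r where r: "suminf f = ennreal r" "r \<ge> 0" by (cases "suminf f") auto
    obtain n :: nat where "real n > r / Cc" using reals_Archimedean2 by blast
    then have "real n * Cc > r" using Ccpos by (simp add: field_simps)
    moreover have "ennreal (real n * Cc) \<le> ennreal r" using bound r by simp
    ultimately show False using r(2) Ccpos
      by (simp add: ennreal_le_iff)
  qed
  then show ?thesis unfolding c_tau_beta_def f_def .
qed

end
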